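(* Let $n\ge\ell\ge1$ and $s\ge1$ be integers and let $\underline{\eta}=(\eta_1,\dots,\eta_s)$ be integer thresholds with $1\le\eta_1<\dots<\eta_s\le\ell$. There exists a binary matrix $\mathbf{K}$ with $n$ columns and $\big\lceil\log_{s+1}\big(\frac{n-\ell+1}{\ell}\big)\big\rceil$ rows such that for all $i,j\in\{0,\dots,n-\ell\}$ with $|i-j|>\ell+1$ one has $\underline{\eta}(\mathbf{K}\mathbf{b}_i)\neq\underline{\eta}(\mathbf{K}\mathbf{b}_j)$.
   Context: Items are indexed $0,\dots,n-1$. For $0\le i\le n-\ell$, $\mathbf{b}_i\in\{0,1\}^n$ denotes the burst of length $\ell$ with head $i$: its $t$-th coordinate is $1$ iff $i\le t\le i+\ell-1$. For thresholds $\underline{\eta}=(\eta_1<\dots<\eta_s)$, the SQGT outcome of a nonnegative integer $y$ is $\underline{\eta}(y)=|\{k:\eta_k\le y\}|\in\{0,\dots,s\}$; for a binary matrix $\mathbf{M}$, $\underline{\eta}(\mathbf{M}\mathbf{b})$ is the vector obtained by applying $\underline{\eta}$ to each entry of the integer vector $\mathbf{M}\mathbf{b}$. A matrix with zero rows is allowed (it gives the empty outcome). *)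

theory Defs
  imports Complex_Main
begin

definition burst :: "nat \<Rightarrow> nat \<Rightarrow> nat \<Rightarrow> nat" where
  "burst l i t = (if i \<le> t \<and> t \<le> i + l - 1 then 1 else 0)"

definition binary_matrix :: "nat \<Rightarrow> nat list list \<Rightarrow> bool" where
  "binary_matrix n M \<longleftrightarrow> (\<forall>row \<in> set M. length row = n \<and> set row \<subseteq> {0, 1})"

definition mat_vec :: "nat \<Rightarrow> nat list list \<Rightarrow> (nat \<Rightarrow> nat) \<Rightarrow> nat list" where
  "mat_vec n M b = map (\<lambda>row. \<Sum>t<n. row ! t * b t) M"

definition sqgt :: "nat list \<Rightarrow> nat \<Rightarrow> nat" where
  "sqgt eta y = card {k. k < length eta \<and> eta ! k \<le> y}"

definition sqgt_vec :: "nat list \<Rightarrow> nat list \<Rightarrow> nat list" where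
  "sqgt_vec eta ys = map (sqgt eta) ys"

end

theory Submission
  imports Defs
begin


locale P =
  fixes l :: nat and eta :: "nat list"
  assumes l1: "1 \<le> l" and s1: "1 \<le> length eta" and srt: "sorted_wrt (<) eta"
    and rng: "\<forall>e \<in> set eta. 1 \<le> e \<and> e \<le> l"
begin

lemma eta_lt: "i < j \<Longrightarrow> j < length eta \<Longrightarrow> eta ! i < eta ! j"
  using srt by (simp add: sorted_wrt_iff_nth_less)

lemma eta_rng: "j < length eta \<Longrightarrow> 1 \<le> eta ! j \<and> eta ! j \<le> l"
  using rng nth_mem by blast

lemma eta_add: "i \<le> j \<Longrightarrow> j < length eta \<Longrightarrow> eta ! i + (j - i) \<le> eta ! j"
proof (induction j)
  case 0 then show ?case by simp
next
  case (Suc j)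
  show ?case
  proof (cases "i = Suc j")
    case True then show ?thesis by simp
  next
    case False
    then have "i \<le> j" using Suc by simp
    then have "eta ! i + (j - i) \<le> eta ! j" using Suc by simp
    moreover have "eta ! j < eta ! Suc j" using eta_lt Suc by simp
    ultimately show ?thesis using \<open>i \<le> j\<close> by simp
  qed
qed

lemma eta_ge: assumes "j < length eta" shows "j + 1 \<le> eta ! j"
proof -
  have "eta ! 0 + j \<le> eta ! j" using eta_add[of 0 j] assms by simp
  moreover have "0 < length eta" using s1 by linarith
  then have "1 \<le> eta ! 0" using eta_rng by blast
  ultimately show ?thesis by simp
qed

lemma eta_le: assumes "j < length eta" shows "eta ! j + (length eta - 1 - j) \<le> l"
proof -
  have "eta ! j + (length eta - 1 - j) \<le> eta ! (length eta - 1)"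
    using eta_add[of j "length eta - 1"] assms by simp
  moreover have "eta ! (length eta - 1) \<le> l" using eta_rng[of "length eta - 1"] s1 by simp
  ultimately show ?thesis by simp
qed

lemma s_le: "length eta \<le> l"
proof -
  have "length eta - 1 + 1 \<le> eta ! (length eta - 1)" using eta_ge[of "length eta - 1"] s1 by simp
  moreover have "eta ! (length eta - 1) \<le> l" using eta_rng[of "length eta - 1"] s1 by simp
  ultimately show ?thesis using s1 by simp
qed

lemma sqgt_eq:
  assumes "j \<le> length eta" "0 < j \<Longrightarrow> eta ! (j - 1) \<le> y" "j < length eta \<Longrightarrow> y < eta ! j"
  shows "sqgt eta y = j"
proof -
  have "{k. k < length eta \<and> eta ! k \<le> y} = {..<j}"
  proof (intro set_eqI iffI)
    fix k assume "k \<in> {k. k < length eta \<and> eta ! k \<le> y}"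
    then have k: "k < length eta" "eta ! k \<le> y" by auto
    show "k \<in> {..<j}"
    proof (rule ccontr)
      assume "k \<notin> {..<j}"
      then have "j \<le> k" by simp
      then have "j < length eta" using k by simp
      then have "y < eta ! j" using assms by simp
      moreover have "eta ! j \<le> eta ! k" using \<open>j \<le> k\<close> k eta_add[of j k] by simp
      ultimately show False using k by simp
    qed
  next
    fix k assume "k \<in> {..<j}"
    then have k: "k < j" by simp
    then have "eta ! k + (j - 1 - k) \<le> eta ! (j - 1)" using eta_add[of k "j - 1"] assms(1) by simp
    then have "eta ! k \<le> eta ! (j - 1)" by simp
    then show "k \<in> {k. k < length eta \<and> eta ! k \<le> y}" using k assms by auto
  qed
  then show ?thesis unfolding sqgt_def by simp
qed

definition win :: "(nat \<Rightarrow> nat) \<Rightarrow> nat \<Rightarrow> nat" where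
  "win f i = (\<Sum>t = i..<i+l. f t)"

lemma win_step: "win f (Suc i) + f i = win f i + f (i + l)"
proof -
  have "win f (Suc i) + f i = (\<Sum>t = i..<Suc (i + l). f t)"
    unfolding win_def using l1
    by (simp add: sum.atLeast_Suc_lessThan add.commute)
  also have "\<dots> = win f i + f (i + l)" unfolding win_def by simp
  finally show ?thesis .
qed

lemma win_mono:
  assumes "\<And>t. f t \<le> f (t + l)" and "i \<le> j"
  shows "win f i \<le> win f j"
  using assms(2)
proof (induction j)
  case 0 then show ?case by simp
next
  case (Suc j)
  show ?case
  proof (cases "i = Suc j")
    case True then show ?thesis by simp
  next
    case False
    then have "win f i \<le> win f j" using Suc by simp
    moreover have "win f j \<le> win f (Suc j)" using win_step[of f j] assms(1)[of j] by simp
    ultimately show ?thesis by simp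
  qed
qed

lemma res_bij: "bij_betw (\<lambda>t. (t + c) mod l) {i..<i+l} {..<l}"
proof -
  have inj: "inj_on (\<lambda>t. (t + c) mod l) {i..<i+l}"
  proof
    fix x y assume x: "x \<in> {i..<i+l}" and y: "y \<in> {i..<i+l}" and e: "(x + c) mod l = (y + c) mod l"
    have key: "a = b" if "a \<in> {i..<i+l}" "b \<in> {i..<i+l}" "a \<le> b" "(a + c) mod l = (b + c) mod l" for a b
    proof -
      have "l dvd (b + c) - (a + c)" using that mod_eq_dvd_iff_nat[of "a + c" "b + c" l] by simp
      then have d: "l dvd b - a" by simp
      have "b - a < l" using that by auto
      then show "a = b" using d that(3) by (metis dvd_imp_le le_antisym not_less zero_less_diff)
    qed
    show "x = y" using key[OF x y] key[OF y x] e by (cases "x \<le> y") auto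
  qed
  show ?thesis
  proof (rule bij_betw_imageI[OF inj])
    have "(\<lambda>t. (t + c) mod l) ` {i..<i+l} \<subseteq> {..<l}" using l1 by auto
    moreover have "card ((\<lambda>t. (t + c) mod l) ` {i..<i+l}) = l" using card_image[OF inj] by simp
    ultimately show "(\<lambda>t. (t + c) mod l) ` {i..<i+l} = {..<l}"
      by (metis card_lessThan card_subset_eq finite_lessThan)
  qed
qed

lemma win_res: "(\<Sum>t = i..<i+l. g ((t + c) mod l)) = (\<Sum>r<l. g r)"
  using sum.reindex_bij_betw[OF res_bij[of c i], of g] by simp

end


context P
begin

definition T1 :: "nat \<Rightarrow> nat" where "T1 L0 = L0 + l - 1"
definition jj :: "nat \<Rightarrow> nat \<Rightarrow> nat \<Rightarrow> nat" where
  "jj L0 G t = (if t < T1 L0 then 0 else min (length eta) (1 + (t - T1 L0) div G))"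
definition rr :: "nat \<Rightarrow> nat \<Rightarrow> nat" where
  "rr L0 t = (t + (l - T1 L0 mod l)) mod l"
definition cnd :: "nat \<Rightarrow> nat \<Rightarrow> bool" where
  "cnd j r = (j = length eta \<or> r < j \<or> l + j + 1 \<le> r + eta ! j)"
definition top :: "nat \<Rightarrow> nat \<Rightarrow> nat \<Rightarrow> nat" where
  "top L0 G t = (if l - 1 \<le> t \<and> cnd (jj L0 G t) (rr L0 t) then 1 else 0)"
definition cidx :: "nat \<Rightarrow> nat \<Rightarrow> nat \<Rightarrow> nat" where
  "cidx L0 G i = (if i < L0 then 0 else min (length eta) (1 + (i - L0) div G))"

lemma cnd_mono: "j \<le> j' \<Longrightarrow> j' \<le> length eta \<Longrightarrow> cnd j r \<Longrightarrow> cnd j' r"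
proof -
  assume a: "j \<le> j'" "j' \<le> length eta" "cnd j r"
  show "cnd j' r"
  proof (cases "j' = length eta")
    case True then show ?thesis by (simp add: cnd_def)
  next
    case False
    then have j': "j' < length eta" using a by simp
    then have "j \<noteq> length eta" using a by simp
    then have "r < j \<or> l + j + 1 \<le> r + eta ! j" using a(3) by (simp add: cnd_def)
    moreover have "eta ! j + (j' - j) \<le> eta ! j'" using eta_add[OF a(1) j'] .
    ultimately show ?thesis using a(1) by (auto simp: cnd_def)
  qed
qed

lemma jj_le: "jj L0 G t \<le> length eta"
  by (simp add: jj_def)

lemma jj_mono: assumes "t \<le> t'" shows "jj L0 G t \<le> jj L0 G t'"
proof (cases "t < T1 L0")
  case True then show ?thesis by (simp add: jj_def)
next
  case False
  then have "(t - T1 L0) div G \<le> (t' - T1 L0) div G" using assms by (simp add: div_le_mono)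
  then show ?thesis using False assms by (simp add: jj_def min_def)
qed

lemma rr_add: "rr L0 (t + l) = rr L0 t"
proof -
  have "t + l + (l - T1 L0 mod l) = (t + (l - T1 L0 mod l)) + l" by simp
  then show ?thesis unfolding rr_def by (metis mod_add_self2)
qed

lemma top_mono: "top L0 G t \<le> top L0 G (t + l)"
proof (cases "top L0 G t = 0")
  case True then show ?thesis by simp
next
  case False
  then have h: "l - 1 \<le> t" "cnd (jj L0 G t) (rr L0 t)" by (auto simp: top_def split: if_splits)
  have "cnd (jj L0 G (t + l)) (rr L0 (t + l))"
    using cnd_mono[OF jj_mono[of t "t + l"] jj_le h(2)] rr_add by simp
  then show ?thesis using h by (simp add: top_def)
qed

lemma win_top_mono: "i \<le> j \<Longrightarrow> win (top L0 G) i \<le> win (top L0 G) j"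
  using win_mono[of "top L0 G"] top_mono by blast

lemma card_cnd: assumes "j < length eta" shows "card {r. r < l \<and> cnd j r} = eta ! j - 1"
proof -
  have e: "j + 1 \<le> eta ! j" "eta ! j \<le> l" using eta_ge[OF assms] eta_rng[OF assms] by auto
  have "{r. r < l \<and> cnd j r} = {..<j} \<union> {l + j + 1 - eta ! j..<l}"
    using assms e s_le by (auto simp: cnd_def)
  moreover have "{..<j} \<inter> {l + j + 1 - eta ! j..<l} = {}" using e by auto
  ultimately have "card {r. r < l \<and> cnd j r} = j + (l - (l + j + 1 - eta ! j))"
    by (simp add: card_Un_disjoint)
  then show ?thesis using e by simp
qed

lemma win_ind: "win (\<lambda>t. if Q (rr L0 t) then 1 else 0) i = card {r. r < l \<and> Q r}"
proof -
  have "win (\<lambda>t. if Q (rr L0 t) then 1 else 0) i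
      = (\<Sum>t = i..<i+l. (\<lambda>r. if Q r then 1 else 0) ((t + (l - T1 L0 mod l)) mod l))"
    unfolding win_def rr_def by simp
  also have "\<dots> = (\<Sum>r<l. if Q r then 1 else 0)" by (rule win_res)
  also have "\<dots> = card {r. r < l \<and> Q r}"
    by (simp add: sum.If_cases lessThan_def Collect_conj_eq Int_commute)
  finally show ?thesis .
qed

lemma win_le_pt: "(\<And>t. i \<le> t \<Longrightarrow> t < i + l \<Longrightarrow> f t \<le> g t) \<Longrightarrow> win f i \<le> win g i"
  unfolding win_def by (rule sum_mono) auto

end


context P
begin

lemma mod_sub_lemma:
  assumes "d \<le> (x + c) mod l" "d \<le> x"
  shows "(x - d + c) mod l = (x + c) mod l - d"
proof -
  define m where "m = (x + c) div l"
  define r where "r = (x + c) mod l"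
  have xc: "x + c = r + l * m" unfolding m_def r_def by simp
  have "x - d + c = (r - d) + l * m" using xc assms unfolding r_def by simp
  moreover have "r - d < l" using l1 unfolding r_def by (simp add: less_imp_diff_less)
  ultimately show ?thesis unfolding r_def[symmetric] by simp
qed

lemma mod_sub0_lemma:
  assumes "(x + c) mod l = 0" "0 < d" "d < l" "d \<le> x"
  shows "(x - d + c) mod l = l - d"
proof -
  define m where "m = (x + c) div l"
  have xc: "x + c = l * m" using div_mult_mod_eq[of "x + c" l] assms(1) unfolding m_def
    by (simp add: mult.commute)
  have m0: "0 < m" using xc assms by (cases m) auto
  have lm: "l * m = l * (m - 1) + l" using m0 by (cases m) simp_all
  have "x - d + c = (x + c) - d" using assms by simp
  also have "\<dots> = l * (m - 1) + l - d" using xc lm by simp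
  also have "\<dots> = (l - d) + l * (m - 1)" using assms by simp
  finally have e: "x - d + c = (l - d) + l * (m - 1)" .
  have "((l - d) + l * (m - 1)) mod l = (l - d) mod l" by (rule mod_mult_self2)
  also have "\<dots> = l - d" using assms by simp
  finally show ?thesis using e by simp
qed

lemma rr_T1: "rr L0 (T1 L0) = 0"
proof -
  have "T1 L0 + (l - T1 L0 mod l) = l * (T1 L0 div l) + l"
  proof -
    have "T1 L0 mod l < l" using l1 by simp
    moreover have "T1 L0 = l * (T1 L0 div l) + T1 L0 mod l" by simp
    ultimately show ?thesis by linarith
  qed
  then show ?thesis unfolding rr_def by simp
qed

context
  fixes L0 G :: nat
  assumes Gm: "G mod l = 1 mod l" and Gge: "l + 1 \<le> G" and L0ge: "eta ! 0 \<le> L0 + 1"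
begin

lemma rr_cross: assumes "j < l" shows "rr L0 (T1 L0 + j * G) = j"
proof -
  have "(T1 L0 + j * G + (l - T1 L0 mod l)) mod l = ((T1 L0 + (l - T1 L0 mod l)) + j * G) mod l"
    by (simp add: algebra_simps)
  also have "\<dots> = ((T1 L0 + (l - T1 L0 mod l)) mod l + (j * G) mod l) mod l" by (simp add: mod_add_eq)
  also have "\<dots> = ((j * G) mod l) mod l" using rr_T1 unfolding rr_def by simp
  also have "(j * G) mod l = (j * (G mod l)) mod l" by (simp add: mod_mult_right_eq)
  also have "\<dots> = j mod l" using Gm by (simp add: mod_mult_right_eq)
  finally show ?thesis unfolding rr_def using assms by simp
qed

lemma jj_cross: assumes "j < length eta" shows "jj L0 G (T1 L0 + j * G) = j + 1"
  using assms Gge by (simp add: jj_def)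

lemma G_pos: "0 < G" using Gge by simp

lemma top_upper:
  assumes "j < length eta" "i + l \<le> T1 L0 + j * G"
  shows "win (top L0 G) i \<le> eta ! j - 1"
proof -
  have "win (top L0 G) i \<le> win (\<lambda>t. if cnd j (rr L0 t) then 1 else 0) i"
  proof (rule win_le_pt)
    fix t assume t: "i \<le> t" "t < i + l"
    have "jj L0 G t \<le> j"
    proof (cases "t < T1 L0")
      case True then show ?thesis by (simp add: jj_def)
    next
      case False
      then have "t - T1 L0 < j * G" using t assms by simp
      then have "(t - T1 L0) div G < j" using G_pos by (simp add: div_less_iff_less_mult)
      then show ?thesis using False by (simp add: jj_def)
    qed
    then show "top L0 G t \<le> (if cnd j (rr L0 t) then 1 else 0)"
      using cnd_mono[of "jj L0 G t" j] assms(1) by (auto simp: top_def)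
  qed
  also have "\<dots> = eta ! j - 1" using win_ind card_cnd[OF assms(1)] by simp
  finally show ?thesis .
qed

lemma top_lower:
  assumes "1 \<le> j" "j \<le> length eta" "L0 + (j - 1) * G \<le> i"
  shows "eta ! (j - 1) \<le> win (top L0 G) i"
proof -
  define c where "c = L0 + (j - 1) * G"
  define tau where "tau = T1 L0 + (j - 1) * G"
  have jl: "j - 1 < length eta" "j - 1 < l" using assms s_le by auto
  have tau_c: "tau = c + l - 1" unfolding tau_def c_def T1_def using l1 by simp
  have rrtau: "rr L0 tau = j - 1" unfolding tau_def using rr_cross jl by simp
  have jjtau: "jj L0 G tau = j" unfolding tau_def using jj_cross jl assms by simp
  have card: "card {r. r < l \<and> (cnd (j - 1) r \<or> r = j - 1)} = eta ! (j - 1)"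
  proof -
    have "{r. r < l \<and> (cnd (j - 1) r \<or> r = j - 1)} = insert (j - 1) {r. r < l \<and> cnd (j - 1) r}"
      using jl by auto
    moreover have "\<not> cnd (j - 1) (j - 1)" using jl eta_rng[OF jl(1)] by (auto simp: cnd_def)
    ultimately have "card {r. r < l \<and> (cnd (j - 1) r \<or> r = j - 1)} = Suc (eta ! (j - 1) - 1)"
      using card_cnd[OF jl(1)] by simp
    then show ?thesis using eta_rng[OF jl(1)] by simp
  qed
  have "eta ! (j - 1) = win (\<lambda>t. if (cnd (j - 1) (rr L0 t) \<or> rr L0 t = j - 1) then 1 else 0) c"
    using win_ind[of "\<lambda>r. cnd (j - 1) r \<or> r = j - 1"] card by simp
  also have "\<dots> \<le> win (top L0 G) c"
  proof (rule win_le_pt)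
    fix t assume t: "c \<le> t" "t < c + l"
    show "(if cnd (j - 1) (rr L0 t) \<or> rr L0 t = j - 1 then 1 else 0) \<le> top L0 G t"
    proof (cases "rr L0 t = j - 1")
      case True
      have inj: "inj_on (\<lambda>t. (t + (l - T1 L0 mod l)) mod l) {c..<c+l}"
        using res_bij bij_betw_def by blast
      have "tau \<in> {c..<c+l}" using tau_c l1 by simp
      then have "t = tau" using inj t True rrtau unfolding rr_def inj_on_def by simp
      moreover have "l - 1 \<le> tau" unfolding tau_def T1_def by simp
      ultimately show ?thesis using jjtau rrtau assms by (simp add: top_def cnd_def)
    next
      case False
      show ?thesis
      proof (cases "cnd (j - 1) (rr L0 t)")
        case False2: False
        then show ?thesis using False by simp
      next
        case C: True
        have jt: "j - 1 \<le> jj L0 G t \<and> l - 1 \<le> t"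
        proof (cases "j = 1")
          case True
          have "l - 1 \<le> t"
          proof (cases "T1 L0 \<le> t")
            case True then show ?thesis unfolding T1_def by simp
          next
            case False
            define d where "d = T1 L0 - t"
            have d: "0 < d" "d < l" "d \<le> T1 L0" using False t \<open>j = 1\<close> l1
              unfolding d_def c_def T1_def by auto
            have "rr L0 t = l - d"
              using mod_sub0_lemma[of "T1 L0" "l - T1 L0 mod l" d] rr_T1 d
              unfolding rr_def d_def by simp
            moreover have "eta \<noteq> []" using s1 by (cases eta) auto
            ultimately have "l + 1 \<le> l - d + eta ! 0" using C True by (simp add: cnd_def)
            then have "d + 1 \<le> eta ! 0" using d by simp
            then show ?thesis using L0ge unfolding d_def T1_def by simp
          qed
          then show ?thesis using True by simp
        next
          case False
          then have j2: "2 \<le> j" using assms by simp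
          define tau' where "tau' = T1 L0 + (j - 2) * G"
          have "j - 1 = Suc (j - 2)" using j2 by simp
          then have "(j - 1) * G = (j - 2) * G + G" by simp
          then have "tau' \<le> c" unfolding tau'_def c_def T1_def using Gge by simp
          moreover have "jj L0 G tau' = j - 1" unfolding tau'_def using jj_cross[of "j - 2"] jl j2 by simp
          moreover have "jj L0 G tau' \<le> jj L0 G t" by (rule jj_mono) (use t \<open>tau' \<le> c\<close> in simp)
          ultimately have "j - 1 \<le> jj L0 G t" by simp
          moreover have "1 \<le> j - 1" using j2 by simp
          then have "1 * G \<le> (j - 1) * G" by (rule mult_le_mono1)
          then have "G \<le> (j - 1) * G" by (simp only: mult_1)
          then have "G \<le> c" unfolding c_def by linarith
          then have "l - 1 \<le> t" using t Gge by simp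
          ultimately show ?thesis by simp
        qed
        then have "cnd (jj L0 G t) (rr L0 t)" using cnd_mono[OF _ jj_le C] by simp
        then show ?thesis using jt by (simp add: top_def)
      qed
    qed
  qed
  also have "\<dots> \<le> win (top L0 G) i" using win_top_mono assms unfolding c_def by simp
  finally show ?thesis .
qed


lemma top_digit: "sqgt eta (win (top L0 G) i) = cidx L0 G i"
proof -
  define j where "j = cidx L0 G i"
  have js: "j \<le> length eta" by (simp add: j_def cidx_def)
  show ?thesis unfolding j_def[symmetric]
  proof (rule sqgt_eq[OF js])
    assume j0: "0 < j"
    then have ni: "\<not> i < L0" "j = min (length eta) (1 + (i - L0) div G)"
      by (auto simp: j_def cidx_def split: if_splits)
    then have "j - 1 \<le> (i - L0) div G" by simp
    then have "(j - 1) * G \<le> i - L0" using G_pos by (simp add: less_eq_div_iff_mult_less_eq)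
    then have "L0 + (j - 1) * G \<le> i" using ni by simp
    then show "eta ! (j - 1) \<le> win (top L0 G) i" using top_lower[of j i] j0 js by simp
  next
    assume js2: "j < length eta"
    have "i < L0 + j * G"
    proof (cases "i < L0")
      case True then show ?thesis by simp
    next
      case False
      then have "j = min (length eta) (1 + (i - L0) div G)" by (simp add: j_def cidx_def)
      then have "(i - L0) div G < j" using js2 by (simp add: min_def split: if_splits)
      then have "i - L0 < j * G" using G_pos by (simp add: div_less_iff_less_mult)
      then show ?thesis by simp
    qed
    then have "i + l \<le> T1 L0 + j * G" unfolding T1_def using l1 by simp
    then have "win (top L0 G) i \<le> eta ! j - 1" using top_upper js2 by simp
    moreover have "1 \<le> eta ! j" using eta_rng js2 by simp
    ultimately show "win (top L0 G) i < eta ! j" by simp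
  qed
qed

lemma top_end:
  assumes "l - length eta \<le> E" "x < l - 1"
  shows "top L0 G (L0 + (length eta - 1) * G + E + x) = 1"
proof -
  define t where "t = L0 + (length eta - 1) * G + E + x"
  define tau where "tau = T1 L0 + (length eta - 1) * G"
  have sl: "length eta - 1 < length eta" "length eta - 1 < l" using s1 s_le by auto
  have jjtau: "jj L0 G tau = length eta" unfolding tau_def using jj_cross[OF sl(1)] s1 by simp
  have rrtau: "rr L0 tau = length eta - 1" unfolding tau_def using rr_cross[OF sl(2)] by simp
  show ?thesis
  proof (cases "tau \<le> t")
    case True
    then have "jj L0 G tau \<le> jj L0 G t" by (rule jj_mono)
    then have "length eta \<le> jj L0 G t" using jjtau by simp
    then have "jj L0 G t = length eta" using jj_le by (simp add: le_antisym)
    moreover have "l - 1 \<le> t" using True unfolding tau_def T1_def t_def by simp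
    ultimately show ?thesis unfolding t_def[symmetric] by (simp add: top_def cnd_def)
  next
    case False
    define d where "d = tau - t"
    have d1: "1 \<le> d" "d \<le> length eta - 1" "d \<le> tau"
      using False assms unfolding d_def tau_def t_def T1_def by auto
    then have s2: "2 \<le> length eta" by simp
    have "rr L0 (tau - d) = length eta - 1 - d"
      using mod_sub_lemma[of d tau "l - T1 L0 mod l"] rrtau d1 unfolding rr_def by simp
    moreover have "tau - d = t" unfolding d_def using False by simp
    ultimately have rrt: "rr L0 t = length eta - 1 - d" by simp
    define tau' where "tau' = T1 L0 + (length eta - 2) * G"
    have "length eta - 1 = Suc (length eta - 2)" using s2 by simp
    then have "(length eta - 1) * G = (length eta - 2) * G + G" by simp
    then have "tau' \<le> t" unfolding tau'_def t_def T1_def using Gge by simp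
    moreover have "jj L0 G tau' = length eta - 1" unfolding tau'_def using jj_cross[of "length eta - 2"] s2 by simp
    moreover have "jj L0 G tau' \<le> jj L0 G t" by (rule jj_mono) (use \<open>tau' \<le> t\<close> in simp)
    ultimately have "length eta - 1 \<le> jj L0 G t" by simp
    then have "rr L0 t < jj L0 G t" using rrt d1 by linarith
    then have c: "cnd (jj L0 G t) (rr L0 t)" by (simp add: cnd_def)
    have "1 \<le> length eta - 1" using s2 by simp
    then have "1 * G \<le> (length eta - 1) * G" by (rule mult_le_mono1)
    then have g: "G \<le> (length eta - 1) * G" by (simp only: mult_1)
    have "l - 1 \<le> t" unfolding t_def using g Gge by linarith
    then show ?thesis using c unfolding t_def[symmetric] by (simp add: top_def)
  qed
qed

end
end


context P
begin

definition A :: "nat \<Rightarrow> nat" where "A k = l * (length eta + 1) ^ k + 1"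
definition len :: "nat \<Rightarrow> bool \<Rightarrow> nat" where "len k b = (if b then A k else A k - length eta)"
definition ty :: "bool \<Rightarrow> nat \<Rightarrow> bool" where
  "ty b j = (if j = 0 then b else if j = length eta then False else True)"
definition off :: "nat \<Rightarrow> bool \<Rightarrow> nat \<Rightarrow> nat" where
  "off k b j = (if j = 0 then 0 else len k b + (j - 1) * A k)"

fun st :: "nat \<Rightarrow> bool \<Rightarrow> nat \<Rightarrow> nat \<Rightarrow> nat" where
  "st 0 b r t = 0"
| "st (Suc k) b r t = (if r < k then
     (let j = cidx (len k b) (A k) t in
       if even j then st k (ty b j) r (t - off k b j)
       else st k (ty b j) r (len k (ty b j) + l - 2 - (t - off k b j)))
     else if r = k then top (len k b) (A k) t else 0)"

lemma eta_ne[simp]: "eta \<noteq> []" using s1 by (cases eta) auto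

lemma A_mod: "A k mod l = 1 mod l"
  unfolding A_def by (subst add.commute) (rule mod_mult_self2)

lemma A_ge: "l + 1 \<le> A k"
proof -
  have "1 \<le> (length eta + 1) ^ k" by simp
  then have "l * 1 \<le> l * (length eta + 1) ^ k" by (rule mult_le_mono2)
  then show ?thesis by (simp add: A_def)
qed

lemma len_ge: "l + 1 - length eta \<le> len k b"
proof (cases b)
  case True then show ?thesis unfolding len_def using A_ge[of k] by simp
next
  case False then show ?thesis unfolding len_def using A_ge[of k] by (simp add: diff_le_mono)
qed

lemma len_pos: "1 \<le> len k b"
  using len_ge[of k b] s_le by linarith

lemma L0ge: "eta ! 0 \<le> len k b + 1"
proof -
  have "eta ! 0 + (length eta - 1 - 0) \<le> l" using eta_le[of 0] s1 by simp
  then show ?thesis using len_ge[of k b] s1 by linarith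
qed

lemma len_ge1: "1 \<le> k \<Longrightarrow> l \<le> len k b"
proof -
  assume k: "1 \<le> k"
  have "(length eta + 1) ^ 1 \<le> (length eta + 1) ^ k" using k by (rule power_increasing) simp
  then have "l * (length eta + 1) \<le> l * (length eta + 1) ^ k" by (simp only: power_one_right mult_le_mono2)
  then have "l * (length eta + 1) + 1 - length eta \<le> len k b" by (auto simp: len_def A_def)
  moreover have f: "length eta \<le> l * length eta" using l1 by simp
  have "l * (length eta + 1) = l + l * length eta" by (simp add: algebra_simps)
  then have "l \<le> l * (length eta + 1) + 1 - length eta" using f by linarith
  ultimately show ?thesis by simp
qed

lemma len_Suc: "len (Suc k) b = len k b + (length eta - 1) * A k + len k False"
proof -
  have As: "A (Suc k) + length eta = (length eta + 1) * A k"
    by (simp add: A_def algebra_simps)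
  have ge: "length eta \<le> A k" using A_ge[of k] s_le by linarith
  have e: "Suc (length eta - 1) = length eta" using s1 by simp
  have "length eta * A k = Suc (length eta - 1) * A k" using e by simp
  also have "\<dots> = A k + (length eta - 1) * A k" by (simp only: mult_Suc)
  finally have "(length eta - 1) * A k + A k = length eta * A k" by simp
  then have h: "(length eta - 1) * A k + A k = length eta * A k" .
  have As': "A (Suc k) + length eta = length eta * A k + A k" using As by (simp add: algebra_simps)
  show ?thesis
  proof (cases b)
    case True then show ?thesis unfolding len_def if_P[OF True] if_False using As' ge h by linarith
  next
    case False then show ?thesis unfolding len_def if_not_P[OF False] if_False using As' ge h by linarith
  qed
qed

lemma ty_s: "ty b (length eta) = False" using s1 by (simp add: ty_def)

lemma off_Suc: "j < length eta \<Longrightarrow> off k b (Suc j) = off k b j + len k (ty b j)"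
  by (cases j) (auto simp: off_def ty_def len_def)

lemma off_s_len: "off k b (length eta) + len k False = len (Suc k) b"
  using s1 len_Suc by (simp add: off_def)

lemma sub_lt: "t < a + c \<Longrightarrow> 0 < c \<Longrightarrow> t - a < (c::nat)" by arith

lemma cidx_eq:
  assumes "j \<le> length eta" "off k b j \<le> t" "j < length eta \<Longrightarrow> t < off k b (Suc j)"
  shows "cidx (len k b) (A k) t = j"
proof (cases j)
  case 0 then show ?thesis using assms s1 by (auto simp: cidx_def off_def)
next
  case (Suc j')
  have Ap: "0 < A k" using A_ge[of k] by linarith
  have t0: "len k b + j' * A k \<le> t" using assms Suc by (simp add: off_def)
  then have "j' * A k \<le> t - len k b" by simp
  then have a: "j' \<le> (t - len k b) div A k" using Ap by (simp add: less_eq_div_iff_mult_less_eq)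
  have "\<not> t < len k b" using t0 by simp
  moreover have "min (length eta) (1 + (t - len k b) div A k) = j"
  proof (cases "j < length eta")
    case True
    then have "t < len k b + Suc j' * A k" using assms Suc by (simp add: off_def)
    then have "t - len k b < Suc j' * A k" using sub_lt[of t "len k b" "Suc j' * A k"] Ap by simp
    then have "(t - len k b) div A k < Suc j'" using Ap by (simp add: div_less_iff_less_mult)
    then show ?thesis using a Suc True by simp
  next
    case False
    then show ?thesis using a Suc assms by simp
  qed
  ultimately show ?thesis by (simp add: cidx_def)
qed

lemma cidx_props:
  assumes "cidx (len k b) (A k) t = j"
  shows "j \<le> length eta" "off k b j \<le> t" "j < length eta \<Longrightarrow> t < off k b (Suc j)"
proof -
  have Ap: "0 < A k" using A_ge[of k] by linarith
  show "j \<le> length eta" using assms by (auto simp: cidx_def)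
  show "off k b j \<le> t"
  proof (cases "t < len k b")
    case True then show ?thesis using assms by (simp add: cidx_def off_def)
  next
    case False
    then have j: "j = min (length eta) (1 + (t - len k b) div A k)" using assms by (simp add: cidx_def)
    show ?thesis
    proof (cases j)
      case 0 then show ?thesis by (simp add: off_def)
    next
      case (Suc j')
      then have "j' \<le> (t - len k b) div A k" using j by simp
      then have "j' * A k \<le> t - len k b" using Ap by (simp add: less_eq_div_iff_mult_less_eq)
      then show ?thesis using False Suc by (simp add: off_def)
    qed
  qed
  show "t < off k b (Suc j)" if js: "j < length eta"
  proof (cases "t < len k b")
    case True then show ?thesis using assms by (simp add: cidx_def off_def)
  next
    case False
    then have j: "j = min (length eta) (1 + (t - len k b) div A k)" using assms by (simp add: cidx_def)
    then have "j = 1 + (t - len k b) div A k" using js by (simp add: min_def split: if_splits)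
    then have "(t - len k b) div A k < j" by simp
    then have "t - len k b < j * A k" using Ap by (simp add: div_less_iff_less_mult)
    then show ?thesis using False by (simp add: off_def)
  qed
qed

lemma win_shift: "c0 \<le> i \<Longrightarrow> win (\<lambda>t. f (t - c0)) i = win f (i - c0)"
proof -
  assume c0: "c0 \<le> i"
  have "win (\<lambda>t. f (t - c0)) i = (\<Sum>t = (i - c0) + c0..<(i - c0 + l) + c0. f (t - c0))"
    unfolding win_def using c0 by simp
  also have "\<dots> = (\<Sum>u = i - c0..<i - c0 + l. f u)"
    by (subst sum.shift_bounds_nat_ivl) simp
  finally show ?thesis unfolding win_def .
qed

lemma win_refl: "i + l \<le> M + 1 \<Longrightarrow> win (\<lambda>t. f (M - t)) i = win f (M + 1 - l - i)"
proof -
  assume h: "i + l \<le> M + 1"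
  show ?thesis unfolding win_def
  proof (rule sum.reindex_bij_witness[of _ "\<lambda>u. M - u" "\<lambda>t. M - t"])
    fix u assume "u \<in> {M + 1 - l - i..<M + 1 - l - i + l}"
    then show "M - (M - u) = u" "M - u \<in> {i..<i + l}" using h by auto
  next
    fix t assume "t \<in> {i..<i + l}"
    then show "M - (M - t) = t" "M - t \<in> {M + 1 - l - i..<M + 1 - l - i + l}" "f (M - t) = f (M - t)"
      using h by auto
  qed
qed

end


context P
begin

definition cv :: "nat \<Rightarrow> bool \<Rightarrow> nat \<Rightarrow> nat \<Rightarrow> nat \<Rightarrow> nat" where
  "cv k b r j t = (if even j then st k (ty b j) r (t - off k b j)
      else st k (ty b j) r (len k (ty b j) + l - 2 - (t - off k b j)))"

definition far :: "nat \<Rightarrow> nat \<Rightarrow> bool" where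
  "far i j \<longleftrightarrow> (l + 1 < i - j \<or> l + 1 < j - i)"

definition good :: "nat \<Rightarrow> bool" where
  "good k \<longleftrightarrow> (\<forall>b. (\<forall>r t. st k b r t \<le> 1) \<and> (\<forall>r<k. \<forall>t<l - 1. st k b r t = 0)
     \<and> (\<forall>r<k. \<forall>x<l - 1. st k b r (len k b + x) = (if even (length eta) \<or> Suc r = k then 1 else 0))
     \<and> (\<forall>i j. i < len k b \<longrightarrow> j < len k b \<longrightarrow> far i j \<longrightarrow>
          (\<exists>r<k. sqgt eta (win (st k b r) i) \<noteq> sqgt eta (win (st k b r) j))))"

lemma st_Suc_low: "r < k \<Longrightarrow> st (Suc k) b r t = cv k b r (cidx (len k b) (A k) t) t"
  by (simp add: cv_def Let_def)

lemma st_Suc_top: "st (Suc k) b k = top (len k b) (A k)"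
  by (rule ext) simp

context
  fixes k :: nat
  assumes gk: "good k"
begin

lemma I1: "st k b r t \<le> 1" using gk by (simp add: good_def)
lemma I2: "r < k \<Longrightarrow> t < l - 1 \<Longrightarrow> st k b r t = 0" using gk by (simp add: good_def)
lemma I3: "r < k \<Longrightarrow> x < l - 1 \<Longrightarrow> st k b r (len k b + x) = (if even (length eta) \<or> Suc r = k then 1 else 0)"
  using gk by (simp add: good_def)
lemma I4: "i < len k b \<Longrightarrow> j < len k b \<Longrightarrow> far i j \<Longrightarrow>
   \<exists>r<k. sqgt eta (win (st k b r) i) \<noteq> sqgt eta (win (st k b r) j)"
  using gk unfolding good_def by blast

lemma copy_lemma:
  assumes r: "r < k" and j: "j \<le> length eta" and t1: "off k b j \<le> t"
    and t2: "t < off k b j + len k (ty b j) + l - 1"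
  shows "st (Suc k) b r t = cv k b r j t"
proof (cases "j = length eta \<or> t < off k b (Suc j)")
  case True
  then have "cidx (len k b) (A k) t = j" using cidx_eq[OF j t1] by auto
  then show ?thesis using st_Suc_low[OF r] by simp
next
  case False
  then have js: "j < length eta" and t3: "off k b (Suc j) \<le> t" using j by auto
  have os: "off k b (Suc j) = off k b j + len k (ty b j)" using off_Suc[OF js] .
  define x where "x = t - off k b (Suc j)"
  have x: "x < l - 1" using t2 t3 os unfolding x_def by simp
  have lk: "l \<le> len k (ty b (Suc j))" using len_ge1 r by simp
  have "cidx (len k b) (A k) t = Suc j"
  proof (rule cidx_eq)
    show "Suc j \<le> length eta" using js by simp
    show "off k b (Suc j) \<le> t" by (rule t3)
    show "t < off k b (Suc (Suc j))" if "Suc j < length eta"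
      using off_Suc[OF that] x lk unfolding x_def by simp
  qed
  then have st: "st (Suc k) b r t = cv k b r (Suc j) t" using st_Suc_low[OF r] by simp
  have tj: "t - off k b j = len k (ty b j) + x" using t3 os unfolding x_def by simp
  have tsj: "t - off k b (Suc j) = x" unfolding x_def by simp
  have l2: "l - 2 - x < l - 1" using x by simp
  have e: "len k (ty b (Suc j)) + l - 2 - x = len k (ty b (Suc j)) + (l - 2 - x)" using x by simp
  have e2: "len k (ty b j) + l - 2 - (len k (ty b j) + x) = l - 2 - x" using x by simp
  show ?thesis
  proof (cases "even j")
    case True
    then have "cv k b r j t = (if even (length eta) \<or> Suc r = k then 1 else 0)"
      using I3[OF r x] tj by (simp add: cv_def)
    moreover have "cv k b r (Suc j) t = (if even (length eta) \<or> Suc r = k then 1 else 0)"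
      using I3[OF r l2] True tsj e by (simp add: cv_def)
    ultimately show ?thesis using st by simp
  next
    case False
    then have "cv k b r j t = 0" using I2[OF r l2] tj e2 by (simp add: cv_def)
    moreover have "cv k b r (Suc j) t = 0" using I2[OF r x] False tsj by (simp add: cv_def)
    ultimately show ?thesis using st by simp
  qed
qed

lemma win_lemma:
  assumes r: "r < k" and j: "j \<le> length eta" and i1: "off k b j \<le> i"
    and i2: "i < off k b j + len k (ty b j)"
  shows "win (st (Suc k) b r) i = win (st k (ty b j) r)
     (if even j then i - off k b j else len k (ty b j) - 1 - (i - off k b j))"
proof -
  have "win (st (Suc k) b r) i = win (cv k b r j) i"
  proof -
    have "\<And>t. i \<le> t \<Longrightarrow> t < i + l \<Longrightarrow> st (Suc k) b r t = cv k b r j t"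
      using copy_lemma[OF r j] i1 i2 by simp
    then show ?thesis unfolding win_def by (intro sum.cong) auto
  qed
  also have "\<dots> = win (st k (ty b j) r)
     (if even j then i - off k b j else len k (ty b j) - 1 - (i - off k b j))"
  proof (cases "even j")
    case True
    then have "win (cv k b r j) i = win (\<lambda>t. st k (ty b j) r (t - off k b j)) i"
      unfolding win_def cv_def by simp
    also have "\<dots> = win (st k (ty b j) r) (i - off k b j)" using win_shift i1 by simp
    finally show ?thesis using True by simp
  next
    case False
    define M where "M = off k b j + len k (ty b j) + l - 2"
    have lp: "1 \<le> len k (ty b j)" by (rule len_pos)
    have "win (cv k b r j) i = win (\<lambda>t. st k (ty b j) r (M - t)) i"
    proof -
      have idx: "len k (ty b j) + l - 2 - (t - off k b j) = M - t" if "off k b j \<le> t" for t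
        using that lp l1 unfolding M_def by arith
      have "\<And>t. i \<le> t \<Longrightarrow> cv k b r j t = st k (ty b j) r (M - t)"
        using False i1 idx unfolding cv_def by simp
      then show ?thesis unfolding win_def by (intro sum.cong) auto
    qed
    also have "\<dots> = win (st k (ty b j) r) (M + 1 - l - i)"
      by (rule win_refl) (use i2 lp l1 in \<open>simp add: M_def\<close>)
    also have "M + 1 - l - i = len k (ty b j) - 1 - (i - off k b j)"
      using i1 i2 lp l1 unfolding M_def by simp
    finally show ?thesis using False by simp
  qed
  finally show ?thesis .
qed

end

end


context P
begin

lemma good0: "good 0"
proof -
  have h: "\<forall>b i j. i < len 0 b \<longrightarrow> j < len 0 b \<longrightarrow> \<not> (l + 1 < i - j \<or> l + 1 < j - i)"
  proof (intro allI impI)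
    fix b i j assume "i < len 0 b" "j < len 0 b"
    moreover have "len 0 b \<le> l + 1" by (simp add: len_def A_def)
    ultimately show "\<not> (l + 1 < i - j \<or> l + 1 < j - i)" by arith
  qed
  show ?thesis unfolding good_def far_def using h by auto
qed

lemma good_Suc: assumes gk: "good k" shows "good (Suc k)"
  unfolding good_def
proof (rule allI, intro conjI)
  fix b
  have Gm: "A k mod l = 1 mod l" and Gge: "l + 1 \<le> A k" and Lg: "eta ! 0 \<le> len k b + 1"
    using A_mod A_ge L0ge by auto
  have offs: "off k b (length eta) = len k b + (length eta - 1) * A k" using s1 by (simp add: off_def)
  have tys: "ty b (length eta) = False" by (rule ty_s)
  show "\<forall>r t. st (Suc k) b r t \<le> 1"
  proof (intro allI)
    fix r t show "st (Suc k) b r t \<le> 1"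
    proof (cases "r < k")
      case True then show ?thesis using st_Suc_low[OF True] I1[OF gk] by (simp add: cv_def)
    next
      case False then show ?thesis by (simp add: top_def)
    qed
  qed
  show "\<forall>r<Suc k. \<forall>t<l - 1. st (Suc k) b r t = 0"
  proof (intro allI impI)
    fix r t assume r: "r < Suc k" and t: "t < l - 1"
    show "st (Suc k) b r t = 0"
    proof (cases "r = k")
      case True then show ?thesis using t by (simp add: top_def)
    next
      case False
      then have rk: "r < k" using r by simp
      have "st (Suc k) b r t = cv k b r 0 t"
        by (rule copy_lemma[OF gk rk]) (use t in \<open>auto simp: off_def ty_def\<close>)
      then show ?thesis using I2[OF gk rk t] by (simp add: cv_def off_def ty_def)
    qed
  qed
  show "\<forall>r<Suc k. \<forall>x<l - 1. st (Suc k) b r (len (Suc k) b + x) =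
      (if even (length eta) \<or> Suc r = Suc k then 1 else 0)"
  proof (intro allI impI)
    fix r x assume r: "r < Suc k" and x: "x < l - 1"
    have teq: "len (Suc k) b + x = off k b (length eta) + len k False + x" using off_s_len[of k b] by simp
    show "st (Suc k) b r (len (Suc k) b + x) = (if even (length eta) \<or> Suc r = Suc k then 1 else 0)"
    proof (cases "r = k")
      case True
      have "l - length eta \<le> len k False" using len_ge[of k False] by simp
      then have "top (len k b) (A k) (len k b + (length eta - 1) * A k + len k False + x) = 1"
        using top_end[OF Gm Gge Lg] x by simp
      then show ?thesis using True teq offs st_Suc_top by simp
    next
      case False
      then have rk: "r < k" using r by simp
      have "st (Suc k) b r (len (Suc k) b + x) = cv k b r (length eta) (len (Suc k) b + x)"
        by (rule copy_lemma[OF gk rk]) (use teq x tys in simp_all)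
      also have "\<dots> = (if even (length eta) then st k False r (len k False + x)
                       else st k False r (len k False + l - 2 - (len k False + x)))"
        using teq tys by (simp add: cv_def)
      also have "\<dots> = (if even (length eta) \<or> Suc r = Suc k then 1 else 0)"
      proof (cases "even (length eta)")
        case True then show ?thesis using I3[OF gk rk x] by simp
      next
        case False
        have "len k False + l - 2 - (len k False + x) = l - 2 - x" using x by simp
        moreover have "l - 2 - x < l - 1" using x by simp
        ultimately show ?thesis using I2[OF gk rk] False rk by simp
      qed
      finally show ?thesis .
    qed
  qed
  show "\<forall>i j. i < len (Suc k) b \<longrightarrow> j < len (Suc k) b \<longrightarrow> far i j \<longrightarrow>
     (\<exists>r<Suc k. sqgt eta (win (st (Suc k) b r) i) \<noteq> sqgt eta (win (st (Suc k) b r) j))"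
  proof (intro allI impI)
    fix i j assume i: "i < len (Suc k) b" and j: "j < len (Suc k) b" and f: "far i j"
    show "\<exists>r<Suc k. sqgt eta (win (st (Suc k) b r) i) \<noteq> sqgt eta (win (st (Suc k) b r) j)"
    proof (cases "cidx (len k b) (A k) i = cidx (len k b) (A k) j")
      case False
      then show ?thesis using top_digit[OF Gm Gge Lg] st_Suc_top[of k b] by (intro exI[of _ k]) simp
    next
      case True
      define c where "c = cidx (len k b) (A k) i"
      have cj: "cidx (len k b) (A k) j = c" using True c_def by simp
      have cs: "c \<le> length eta" using cidx_props(1) c_def by simp
      have in_rng: "off k b c \<le> x \<and> x < off k b c + len k (ty b c)"
        if "cidx (len k b) (A k) x = c" "x < len (Suc k) b" for x
      proof -
        have "off k b c \<le> x" using cidx_props(2)[OF that(1)] .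
        moreover have "x < off k b c + len k (ty b c)"
        proof (cases "c < length eta")
          case True then show ?thesis using cidx_props(3)[OF that(1)] off_Suc[OF True] by simp
        next
          case False
          then have "c = length eta" using cs by simp
          then show ?thesis using that(2) off_s_len[of k b] tys by simp
        qed
        ultimately show ?thesis by simp
      qed
      have ri: "off k b c \<le> i" "i < off k b c + len k (ty b c)" using in_rng[of i] c_def i by auto
      have rj: "off k b c \<le> j" "j < off k b c + len k (ty b c)" using in_rng[of j] cj j by auto
      define sg where "sg x = (if even c then x - off k b c else len k (ty b c) - 1 - (x - off k b c))" for x
      have sgl: "sg i < len k (ty b c)" "sg j < len k (ty b c)" using ri rj len_pos[of k "ty b c"]
        unfolding sg_def by auto
      have fs: "far (sg i) (sg j)" using f ri rj unfolding far_def sg_def by auto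
      obtain r where r: "r < k" "sqgt eta (win (st k (ty b c) r) (sg i)) \<noteq> sqgt eta (win (st k (ty b c) r) (sg j))"
        using I4[OF gk sgl fs] by blast
      have "win (st (Suc k) b r) i = win (st k (ty b c) r) (sg i)"
        using win_lemma[OF gk r(1) cs ri] unfolding sg_def by simp
      moreover have "win (st (Suc k) b r) j = win (st k (ty b c) r) (sg j)"
        using win_lemma[OF gk r(1) cs rj] unfolding sg_def by simp
      ultimately show ?thesis using r by (intro exI[of _ r]) simp
    qed
  qed
qed

lemma good_all: "good k"
  by (induction k) (use good0 good_Suc in auto)

end


lemma sum_burst:
  assumes "1 \<le> l" "i + l \<le> n"
  shows "(\<Sum>t<n. g t * burst l i t) = (\<Sum>t = i..<i+l. g t)"
proof -
  have "(\<Sum>t<n. g t * burst l i t) = (\<Sum>t<n. if t \<in> {i..<i+l} then g t else 0)"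
    using assms by (intro sum.cong) (auto simp: burst_def)
  also have "\<dots> = (\<Sum>t \<in> {..<n} \<inter> {i..<i+l}. g t)" by (simp add: sum.inter_restrict)
  also have "{..<n} \<inter> {i..<i+l} = {i..<i+l}" using assms by auto
  finally show ?thesis by simp
qed

theorem mainTheorem2:
  fixes n l :: nat and eta :: "nat list"
  assumes "1 \<le> l" and "l \<le> n"
    and "1 \<le> length eta"
    and "sorted_wrt (<) eta"
    and "\<forall>e \<in> set eta. 1 \<le> e \<and> e \<le> l"
  shows "\<exists>K. binary_matrix n K \<and>
           length K = nat \<lceil>log (real (length eta + 1)) (real (n - l + 1) / real l)\<rceil> \<and>
           (\<forall>i j. i \<le> n - l \<longrightarrow> j \<le> n - l \<longrightarrow> \<bar>int i - int j\<bar> > int l + 1 \<longrightarrow>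
              sqgt_vec eta (mat_vec n K (burst l i)) \<noteq> sqgt_vec eta (mat_vec n K (burst l j)))"
proof -
  interpret P l eta using assms by unfold_locales auto
  define q where "q = length eta + 1"
  define N where "N = n - l + 1"
  define m where "m = nat \<lceil>log (real q) (real N / real l)\<rceil>"
  have q2: "2 \<le> q" using assms(3) unfolding q_def by simp
  have Npos: "0 < N" unfolding N_def by simp
  have "real N \<le> real l * real q ^ m"
  proof -
    have x0: "0 < real N / real l" using Npos assms(1) by simp
    have "log (real q) (real N / real l) \<le> real m"
      unfolding m_def by linarith
    then have "real q powr log (real q) (real N / real l) \<le> real q powr real m"
      using q2 by (intro powr_mono) auto
    then have "real N / real l \<le> real q ^ m"
      using q2 x0 by (simp add: powr_realpow)
    then show ?thesis using assms(1) by (simp add: field_simps)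
  qed
  then have "N \<le> l * q ^ m" by (metis of_nat_le_iff of_nat_mult of_nat_power)
  then have NL: "N \<le> len m True" unfolding len_def A_def q_def by simp
  define K where "K = map (\<lambda>r. map (st m True r) [0..<n]) [0..<m]"
  have g: "good m" by (rule good_all)
  have bin: "st m True r t \<le> 1" for r t using g unfolding good_def by blast
  have mv: "mat_vec n K (burst l i) = map (\<lambda>r. win (st m True r) i) [0..<m]" if "i \<le> n - l" for i
  proof -
    have "i + l \<le> n" using that assms(2) by simp
    then show ?thesis unfolding K_def mat_vec_def win_def
      by (simp add: sum_burst[OF assms(1)] cong: sum.cong) (auto intro!: sum.cong)
  qed
  show ?thesis
  proof (intro exI conjI allI impI)
    have bin2: "st m True r t \<in> {0, 1}" for r t using bin[of r t] by auto
    show "binary_matrix n K" unfolding K_def binary_matrix_def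
      using bin2 by (auto simp: subset_iff)
    show "length K = nat \<lceil>log (real (length eta + 1)) (real (n - l + 1) / real l)\<rceil>"
      unfolding K_def m_def q_def N_def by simp
  next
    fix i j assume i: "i \<le> n - l" and j: "j \<le> n - l" and d: "int l + 1 < \<bar>int i - int j\<bar>"
    have far: "far i j" using d unfolding far_def by arith
    have il: "i < len m True" "j < len m True" using i j NL unfolding N_def using assms(2) by auto
    obtain r where r: "r < m" "sqgt eta (win (st m True r) i) \<noteq> sqgt eta (win (st m True r) j)"
      using g il far unfolding good_def by blast
    show "sqgt_vec eta (mat_vec n K (burst l i)) \<noteq> sqgt_vec eta (mat_vec n K (burst l j))"
    proof
      assume e: "sqgt_vec eta (mat_vec n K (burst l i)) = sqgt_vec eta (mat_vec n K (burst l j))"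
      have "sqgt_vec eta (mat_vec n K (burst l i)) ! r = sqgt_vec eta (mat_vec n K (burst l j)) ! r"
        using e by simp
      then show False using r mv[OF i] mv[OF j] by (simp add: sqgt_vec_def)
    qed
  qed
qed


end
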